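(* Assume the setting below (assumptions A1–A3, any step size $\alpha>0$). For every integer $k\ge 0$ let $$\Delta_k=\frac{L(\tau+1)}{2}\sum_{j=k-\tau}^{k}\|x_{j+1}-x_j\|^2 .$$ Then for every $k\ge 0$ and every $x\in\mathbb{R}^d$, $$\Phi(x_{k+1})\le \Phi(x)+\frac{1}{2\alpha}\|x-x_k\|^2-\frac{1}{2\alpha}\|x-x_{k+1}\|^2-\frac{1}{2\alpha}\|x_{k+1}-x_k\|^2+\Delta_k .$$
   Context: Problem: minimize $\Phi(x)=F(x)+h(x)$ over $x\in\mathbb{R}^d$, where $F(x)=\sum_{n=1}^N f_n(x)$. Assumption A1: each $f_n:\mathbb{R}^d\to\mathbb{R}$ is convex and differentiable with $\|\nabla f_n(x)-\nabla f_n(y)\|\le L_n\|x-y\|$ for all $x,y$; set $L=\sum_{n=1}^N L_n$. Assumption A2: $h:\mathbb{R}^d\to(-\infty,\infty]$ is proper, closed, convex, and $\partial h(x)\neq\emptyset$ for all $x$ in its effective domain. Assumption A3: the delays $\tau_k^n$ ($k\ge0$, $n=1,\dots,N$) are integers with $\tau_k^n\in\{0,1,\dots,\tau\}$ for a fixed nonnegative integer $\tau$ (the delay parameter). PIAG method: given $x_0\in\mathbb{R}^d$ and step size $\alpha>0$, with the convention $x_j=x_0$ for $j<0$, for $k\ge0$ set $g_k=\sum_{n=1}^N\nabla f_n(x_{k-\tau_k^n})$ and $$x_{k+1}=\arg\min_{x\in\mathbb{R}^d}\Big\{h(x)+\langle g_k,x-x_k\rangle+\frac{1}{2\alpha}\|x-x_k\|^2\Big\}.$$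 In particular $\|x_{j+1}-x_j\|=0$ for $j<0$. *)

theory Defs
  imports "HOL-Analysis.Analysis"
begin

definition epigraph :: "('a \<Rightarrow> ereal) \<Rightarrow> ('a \<times> real) set" where
  "epigraph h = {(x, t). h x \<le> ereal t}"

definition effective_domain :: "('a \<Rightarrow> ereal) \<Rightarrow> 'a set" where
  "effective_domain h = {x. h x < \<infinity>}"

definition proper_fun :: "('a \<Rightarrow> ereal) \<Rightarrow> bool" where
  "proper_fun h \<longleftrightarrow> (\<forall>x. h x > -\<infinity>) \<and> (\<exists>x. h x < \<infinity>)"

definition closed_fun :: "('a::real_normed_vector \<Rightarrow> ereal) \<Rightarrow> bool" where
  "closed_fun h \<longleftrightarrow> closed (epigraph h)"

definition convex_fun :: "('a::real_vector \<Rightarrow> ereal) \<Rightarrow> bool" where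
  "convex_fun h \<longleftrightarrow> convex (epigraph h)"

definition subdifferential :: "('a::real_inner \<Rightarrow> ereal) \<Rightarrow> 'a \<Rightarrow> 'a set" where
  "subdifferential h x = {g. \<forall>y. h y \<ge> h x + ereal (g \<bullet> (y - x))}"

end

theory Submission imports Defs begin
lemma line_deriv:
  fixes f :: "'a::real_inner \<Rightarrow> real"
  assumes d: "(f has_derivative (\<lambda>v. g \<bullet> v)) (at (w + t *\<^sub>R u))"
  shows "((\<lambda>t. f (w + t *\<^sub>R u)) has_real_derivative (g \<bullet> u)) (at t)"
proof -
  have l: "((\<lambda>t. w + t *\<^sub>R u) has_derivative (\<lambda>s. s *\<^sub>R u)) (at t)"
    by (auto intro!: derivative_eq_intros)
  have "((\<lambda>t. f (w + t *\<^sub>R u)) has_derivative (\<lambda>s. g \<bullet> (s *\<^sub>R u))) (at t)"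
    using has_derivative_compose[OF l d] by (simp add: o_def)
  moreover have "(\<lambda>s. g \<bullet> (s *\<^sub>R u)) = (*) (g \<bullet> u)" by (auto simp: fun_eq_iff)
  ultimately show ?thesis by (simp add: has_field_derivative_def)
qed

lemma grad_ineq:
  fixes f :: "'a::real_inner \<Rightarrow> real"
  assumes cvx: "convex_on UNIV f" and d: "(f has_derivative (\<lambda>v. g \<bullet> v)) (at w)"
  shows "f w + g \<bullet> (z - w) \<le> f z"
proof -
  define \<psi> where "\<psi> = (\<lambda>t::real. f (w + t *\<^sub>R (z - w)))"
  have c: "convex_on UNIV \<psi>"
  proof (rule convex_onI)
    fix t a b :: real assume t: "t > 0" "t < 1"
    have "w + ((1 - t) * a + t * b) *\<^sub>R (z - w) = (1 - t) *\<^sub>R (w + a *\<^sub>R (z - w)) + t *\<^sub>R (w + b *\<^sub>R (z - w))"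
      by (simp add: algebra_simps)
    then show "\<psi> ((1 - t) *\<^sub>R a + t *\<^sub>R b) \<le> (1 - t) * \<psi> a + t * \<psi> b"
      unfolding \<psi>_def using convex_onD[OF cvx, of t] t by simp
  qed simp
  have "(\<psi> has_real_derivative (g \<bullet> (z - w))) (at 0)"
    unfolding \<psi>_def by (rule line_deriv) (use d in simp)
  then have "\<psi> 1 - \<psi> 0 \<ge> (g \<bullet> (z - w)) * (1 - 0)"
    by (intro convex_on_imp_above_tangent[OF c]) (auto intro: has_field_derivative_at_within)
  then show ?thesis by (simp add: \<psi>_def)
qed

lemma descent:
  fixes f :: "'a::real_inner \<Rightarrow> real"
  assumes d: "\<And>z. (f has_derivative (\<lambda>v. gf z \<bullet> v)) (at z)"
    and lip: "\<And>y z. norm (gf y - gf z) \<le> L * norm (y - z)"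
  shows "f y \<le> f x + gf x \<bullet> (y - x) + L / 2 * (norm (y - x))\<^sup>2"
proof -
  define \<phi> where "\<phi> = (\<lambda>t::real. f (x + t *\<^sub>R (y - x)) - t * (gf x \<bullet> (y - x)) - L / 2 * t\<^sup>2 * (norm (y - x))\<^sup>2)"
  have "\<phi> 1 \<le> \<phi> 0"
  proof (rule DERIV_nonpos_imp_nonincreasing[of 0 1])
    fix t :: real assume t: "0 \<le> t" "t \<le> 1"
    have D: "(\<phi> has_real_derivative (gf (x + t *\<^sub>R (y - x)) \<bullet> (y - x) - gf x \<bullet> (y - x) - L / 2 * (2 * t) * (norm (y - x))\<^sup>2)) (at t)"
    proof -
      have L: "((\<lambda>z. f (x + z *\<^sub>R (y - x))) has_real_derivative gf (x + t *\<^sub>R (y - x)) \<bullet> (y - x)) (at t)"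
        by (rule line_deriv[OF d])
      have A: "((\<lambda>t. t * (gf x \<bullet> (y - x))) has_real_derivative (gf x \<bullet> (y - x))) (at t)"
        by (auto intro!: derivative_eq_intros)
      have B: "((\<lambda>t. L / 2 * t\<^sup>2 * (norm (y - x))\<^sup>2) has_real_derivative L / 2 * (2 * t) * (norm (y - x))\<^sup>2) (at t)"
        by (auto intro!: derivative_eq_intros)
      show ?thesis unfolding \<phi>_def
        using DERIV_diff[OF DERIV_diff[OF L A] B] by simp

    qed
    have "(gf (x + t *\<^sub>R (y - x)) - gf x) \<bullet> (y - x) \<le> norm (gf (x + t *\<^sub>R (y - x)) - gf x) * norm (y - x)"
      by (rule norm_cauchy_schwarz)
    also have "\<dots> \<le> L * norm (t *\<^sub>R (y - x)) * norm (y - x)"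
      using lip[of "x + t *\<^sub>R (y - x)" x] by (intro mult_right_mono) auto
    also have "\<dots> = L * t * (norm (y - x))\<^sup>2" using t by (simp add: power2_eq_square)
    finally have "gf (x + t *\<^sub>R (y - x)) \<bullet> (y - x) - gf x \<bullet> (y - x) - L / 2 * (2 * t) * (norm (y - x))\<^sup>2 \<le> 0"
      by (simp add: inner_diff_left)
    with D show "\<exists>y. (\<phi> has_real_derivative y) (at t) \<and> y \<le> 0" by blast
  qed simp
  then show ?thesis by (simp add: \<phi>_def)
qed

lemma norm_comb:
  fixes a b :: "'a::real_inner"
  shows "(norm ((1 - t) *\<^sub>R a + t *\<^sub>R b))\<^sup>2 = (1 - t) * (norm a)\<^sup>2 + t * (norm b)\<^sup>2 - t * (1 - t) * (norm (b - a))\<^sup>2"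
  by (simp add: power2_norm_eq_inner inner_add_left inner_add_right inner_diff_left inner_diff_right inner_commute algebra_simps)

lemma three_point:
  fixes h :: "'a::real_inner \<Rightarrow> ereal"
  assumes cvx: "convex_fun h" and pr: "proper_fun h" and a: "\<alpha> > 0"
    and mn: "\<And>y. h p + ereal (g \<bullet> (p - c) + 1 / (2 * \<alpha>) * (norm (p - c))\<^sup>2)
               \<le> h y + ereal (g \<bullet> (y - c) + 1 / (2 * \<alpha>) * (norm (y - c))\<^sup>2)"
  shows "h p + ereal (g \<bullet> (p - c) + 1 / (2 * \<alpha>) * (norm (p - c))\<^sup>2 + 1 / (2 * \<alpha>) * (norm (z - p))\<^sup>2)
         \<le> h z + ereal (g \<bullet> (z - c) + 1 / (2 * \<alpha>) * (norm (z - c))\<^sup>2)"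
proof (cases "h z = \<infinity>")
  case True then show ?thesis by simp
next
  case False
  define q where "q = (\<lambda>y. g \<bullet> (y - c) + 1 / (2 * \<alpha>) * (norm (y - c))\<^sup>2)"
  define cc where "cc = 1 / (2 * \<alpha>) * (norm (z - p))\<^sup>2"
  have cc0: "cc \<ge> 0" using a by (simp add: cc_def)
  from pr have ninf: "\<And>y. h y \<noteq> -\<infinity>" by (auto simp: proper_fun_def)
  obtain rz where rz: "h z = ereal rz" using False ninf[of z] by (cases "h z") auto
  have "h p + ereal (q p) \<le> ereal (rz + q z)" using mn[of z] rz by (simp add: q_def)
  then have "h p \<noteq> \<infinity>" by auto
  then obtain rp where rp: "h p = ereal rp" using ninf[of p] by (cases "h p") auto
  have key: "rp + q p + (1 - t) * cc \<le> rz + q z" if t: "0 < t" "t < 1" for t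
  proof -
    define yt where "yt = (1 - t) *\<^sub>R p + t *\<^sub>R z"
    have e1: "(p, rp) \<in> epigraph h" "(z, rz) \<in> epigraph h" using rp rz by (auto simp: epigraph_def)
    have "(1 - t) *\<^sub>R (p, rp) + t *\<^sub>R (z, rz) \<in> epigraph h"
      using cvx e1 t unfolding convex_fun_def by (intro convexD) auto
    then have hy: "h yt \<le> ereal ((1 - t) * rp + t * rz)" by (simp add: epigraph_def yt_def)
    have "yt - c = (1 - t) *\<^sub>R (p - c) + t *\<^sub>R (z - c)" by (simp add: yt_def algebra_simps)
    note ytc = this
    have zp: "z - p = (z - c) - (p - c)" by simp
    have n: "(norm (yt - c))\<^sup>2 = (1 - t) * (norm (p - c))\<^sup>2 + t * (norm (z - c))\<^sup>2 - t * (1 - t) * (norm (z - p))\<^sup>2"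
      unfolding ytc zp by (rule norm_comb)
    have i: "g \<bullet> (yt - c) = (1 - t) * (g \<bullet> (p - c)) + t * (g \<bullet> (z - c))"
      unfolding ytc by (simp add: inner_add_right)
    have qy: "q yt = (1 - t) * q p + t * q z - t * (1 - t) * cc"
      unfolding q_def cc_def n i using a by (simp add: field_simps)
    have "ereal (rp + q p) \<le> h yt + ereal (q yt)" using mn[of yt] rp by (simp add: q_def)
    also have "\<dots> \<le> ereal ((1 - t) * rp + t * rz) + ereal (q yt)" using hy by (intro add_right_mono)
    finally have "rp + q p \<le> (1 - t) * rp + t * rz + q yt" by simp
    then have "t * (rp + q p) \<le> t * (rz + q z) - t * ((1 - t) * cc)" by (simp add: qy algebra_simps)
    then have "t * (rp + q p + (1 - t) * cc) \<le> t * (rz + q z)" by (simp add: algebra_simps)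
    then show ?thesis using t by simp
  qed
  have "rp + q p + cc \<le> rz + q z"
  proof (rule field_le_epsilon)
    fix e :: real assume e: "e > 0"
    define t where "t = min (1/2) (e / (cc + 1))"
    have t0: "0 < t" "t < 1" using e cc0 by (auto simp: t_def)
    have "t * cc \<le> e / (cc + 1) * cc" using cc0 by (intro mult_right_mono) (auto simp: t_def)
    also have "\<dots> \<le> e" using e cc0 by (simp add: field_simps)
    finally show "rp + q p + cc \<le> rz + q z + e" using key[OF t0] by (simp add: algebra_simps)
  qed
  then show ?thesis using rp rz by (simp add: q_def cc_def)
qed

lemma telescope_int:
  fixes x :: "int \<Rightarrow> 'a::ab_group_add"
  shows "x (k + 1) - x (k - int m) = (\<Sum>j\<in>{k - int m..k}. x (j + 1) - x j)"
proof (induction m)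
  case 0 then show ?case by simp
next
  case (Suc m)
  have "{k - int (Suc m)..k} = insert (k - int (Suc m)) {k - int m..k}" by auto
  then have "(\<Sum>j\<in>{k - int (Suc m)..k}. x (j + 1) - x j) = (x (k - int m) - x (k - int (Suc m))) + (\<Sum>j\<in>{k - int m..k}. x (j + 1) - x j)"
    by (simp add: algebra_simps)
  moreover have "x (k + 1) - x (k - int (Suc m)) = (x (k - int m) - x (k - int (Suc m))) + (x (k + 1) - x (k - int m))"
    by (simp add: algebra_simps)
  ultimately show ?case using Suc by simp
qed

lemma delay_sum:
  fixes x :: "int \<Rightarrow> 'a::real_normed_vector"
  assumes "d \<le> \<tau>"
  shows "(norm (x (k + 1) - x (k - int d)))\<^sup>2 \<le> (real \<tau> + 1) * (\<Sum>j\<in>{k - int \<tau>..k}. (norm (x (j + 1) - x j))\<^sup>2)"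
proof -
  have "norm (x (k + 1) - x (k - int d)) \<le> (\<Sum>j\<in>{k - int d..k}. norm (x (j + 1) - x j))"
    unfolding telescope_int by (rule norm_sum)
  then have "(norm (x (k + 1) - x (k - int d)))\<^sup>2 \<le> (\<Sum>j\<in>{k - int d..k}. norm (x (j + 1) - x j))\<^sup>2"
    by (intro power_mono) auto
  also have "\<dots> \<le> (\<Sum>j\<in>{k - int d..k}. (norm (x (j + 1) - x j))\<^sup>2) * card {k - int d..k}"
    by (rule sum_squared_le_sum_of_squares)
  also have "card {k - int d..k} = d + 1" by simp
  also have "(\<Sum>j\<in>{k - int d..k}. (norm (x (j + 1) - x j))\<^sup>2) * real (d + 1)
      \<le> (\<Sum>j\<in>{k - int \<tau>..k}. (norm (x (j + 1) - x j))\<^sup>2) * (real \<tau> + 1)"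
    using assms by (intro mult_mono sum_mono2 sum_nonneg) auto
  finally show ?thesis by (simp add: mult.commute)
qed

theorem lemma2:
  fixes N :: nat
    and f :: "nat \<Rightarrow> 'a::euclidean_space \<Rightarrow> real"
    and gf :: "nat \<Rightarrow> 'a \<Rightarrow> 'a"
    and Ln :: "nat \<Rightarrow> real"
    and h :: "'a \<Rightarrow> ereal"
    and \<tau> :: nat
    and dly :: "nat \<Rightarrow> nat \<Rightarrow> nat"
    and \<alpha> :: real
    and x :: "int \<Rightarrow> 'a"
  assumes N_pos: "1 \<le> N"
    and f_convex: "\<And>n. n \<in> {1..N} \<Longrightarrow> convex_on UNIV (f n)"
    and f_grad: "\<And>n z. n \<in> {1..N} \<Longrightarrow> (f n has_derivative (\<lambda>v. gf n z \<bullet> v)) (at z)"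
    and f_lip: "\<And>n y z. n \<in> {1..N} \<Longrightarrow> norm (gf n y - gf n z) \<le> Ln n * norm (y - z)"
    and h_proper: "proper_fun h"
    and h_closed: "closed_fun h"
    and h_convex: "convex_fun h"
    and h_subdiff: "\<And>z. z \<in> effective_domain h \<Longrightarrow> subdifferential h z \<noteq> {}"
    and delay_bound: "\<And>k n. n \<in> {1..N} \<Longrightarrow> dly k n \<le> \<tau>"
    and alpha_pos: "\<alpha> > 0"
    and x_neg: "\<And>j. j < 0 \<Longrightarrow> x j = x 0"
    and x_step: "\<And>(k::nat) y.
       h (x (int k + 1)) + ereal ((\<Sum>n\<in>{1..N}. gf n (x (int k - int (dly k n)))) \<bullet> (x (int k + 1) - x (int k))
          + 1 / (2 * \<alpha>) * (norm (x (int k + 1) - x (int k)))\<^sup>2)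
       \<le> h y + ereal ((\<Sum>n\<in>{1..N}. gf n (x (int k - int (dly k n)))) \<bullet> (y - x (int k))
          + 1 / (2 * \<alpha>) * (norm (y - x (int k)))\<^sup>2)"
  shows "\<And>(k::nat) z.
    ereal (\<Sum>n\<in>{1..N}. f n (x (int k + 1))) + h (x (int k + 1))
    \<le> ereal (\<Sum>n\<in>{1..N}. f n z) + h z
       + ereal (1 / (2 * \<alpha>) * (norm (z - x (int k)))\<^sup>2
                - 1 / (2 * \<alpha>) * (norm (z - x (int k + 1)))\<^sup>2
                - 1 / (2 * \<alpha>) * (norm (x (int k + 1) - x (int k)))\<^sup>2
                + (\<Sum>n\<in>{1..N}. Ln n) * (real \<tau> + 1) / 2
                  * (\<Sum>j\<in>{int k - int \<tau> .. int k}. (norm (x (j + 1) - x j))\<^sup>2))"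
proof -
  fix k :: nat and z :: 'a
  define p where "p = x (int k + 1)"
  define c where "c = x (int k)"
  define w where "w = (\<lambda>n. x (int k - int (dly k n)))"
  define g where "g = (\<Sum>n\<in>{1..N}. gf n (w n))"
  define S where "S = (\<Sum>j\<in>{int k - int \<tau> .. int k}. (norm (x (j + 1) - x j))\<^sup>2)"
  define a where "a = 1 / (2 * \<alpha>)"
  obtain b :: 'a where b: "b \<in> Basis" using nonempty_Basis by blast
  have Ln0: "Ln n \<ge> 0" if n: "n \<in> {1..N}" for n
  proof -
    have "0 \<le> norm (gf n b - gf n 0)" by simp
    also have "\<dots> \<le> Ln n * norm (b - 0)" by (rule f_lip[OF n])
    finally show ?thesis using b by simp
  qed
  have fn: "f n p \<le> f n z + gf n (w n) \<bullet> (p - z) + Ln n * (real \<tau> + 1) / 2 * S" if n: "n \<in> {1..N}" for n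
  proof -
    have d1: "f n p \<le> f n (w n) + gf n (w n) \<bullet> (p - w n) + Ln n / 2 * (norm (p - w n))\<^sup>2"
      by (rule descent[OF f_grad[OF n] f_lip[OF n]])
    have d2: "f n (w n) + gf n (w n) \<bullet> (z - w n) \<le> f n z"
      by (rule grad_ineq[OF f_convex[OF n] f_grad[OF n]])
    have d3: "(norm (p - w n))\<^sup>2 \<le> (real \<tau> + 1) * S"
      unfolding p_def w_def S_def by (rule delay_sum[OF delay_bound[OF n]])
    have d4: "Ln n / 2 * (norm (p - w n))\<^sup>2 \<le> Ln n / 2 * ((real \<tau> + 1) * S)"
      using Ln0[OF n] d3 by (intro mult_left_mono) auto
    have "gf n (w n) \<bullet> (p - w n) = gf n (w n) \<bullet> (p - z) + gf n (w n) \<bullet> (z - w n)"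
      by (simp add: inner_diff_right)
    moreover have "Ln n / 2 * ((real \<tau> + 1) * S) = Ln n * (real \<tau> + 1) / 2 * S" by simp
    ultimately show ?thesis using d1 d2 d4 by linarith
  qed
  have Fsum: "(\<Sum>n\<in>{1..N}. f n p) \<le> (\<Sum>n\<in>{1..N}. f n z) + g \<bullet> (p - z) + (\<Sum>n\<in>{1..N}. Ln n) * (real \<tau> + 1) / 2 * S"
  proof -
    have "(\<Sum>n\<in>{1..N}. f n p) \<le> (\<Sum>n\<in>{1..N}. f n z + gf n (w n) \<bullet> (p - z) + Ln n * (real \<tau> + 1) / 2 * S)"
      by (rule sum_mono) (rule fn)
    also have "\<dots> = (\<Sum>n\<in>{1..N}. f n z) + g \<bullet> (p - z) + (\<Sum>n\<in>{1..N}. Ln n) * (real \<tau> + 1) / 2 * S"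
      by (simp add: sum.distrib g_def inner_sum_left sum_distrib_right sum_divide_distrib)
    finally show ?thesis .
  qed
  have tp: "h p + ereal (g \<bullet> (p - c) + a * (norm (p - c))\<^sup>2 + a * (norm (z - p))\<^sup>2)
         \<le> h z + ereal (g \<bullet> (z - c) + a * (norm (z - c))\<^sup>2)"
    unfolding a_def
    by (rule three_point[OF h_convex h_proper alpha_pos]) (use x_step[of k] in \<open>simp add: p_def c_def g_def w_def\<close>)
  from h_proper have ninf: "\<And>y. h y \<noteq> -\<infinity>" by (auto simp: proper_fun_def)
  show "ereal (\<Sum>n\<in>{1..N}. f n (x (int k + 1))) + h (x (int k + 1))
    \<le> ereal (\<Sum>n\<in>{1..N}. f n z) + h z
       + ereal (1 / (2 * \<alpha>) * (norm (z - x (int k)))\<^sup>2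
                - 1 / (2 * \<alpha>) * (norm (z - x (int k + 1)))\<^sup>2
                - 1 / (2 * \<alpha>) * (norm (x (int k + 1) - x (int k)))\<^sup>2
                + (\<Sum>n\<in>{1..N}. Ln n) * (real \<tau> + 1) / 2
                  * (\<Sum>j\<in>{int k - int \<tau> .. int k}. (norm (x (j + 1) - x j))\<^sup>2))"
  proof (cases "h z = \<infinity>")
    case True then show ?thesis by simp
  next
    case False
    then obtain rz where rz: "h z = ereal rz" using ninf[of z] by (cases "h z") auto
    with tp have "h p \<noteq> \<infinity>" by auto
    then obtain rp where rp: "h p = ereal rp" using ninf[of p] by (cases "h p") auto
    from tp rp rz have r: "rp + (g \<bullet> (p - c) + a * (norm (p - c))\<^sup>2 + a * (norm (z - p))\<^sup>2)
         \<le> rz + (g \<bullet> (z - c) + a * (norm (z - c))\<^sup>2)" by simp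
    have gg: "g \<bullet> (p - z) = g \<bullet> (p - c) - g \<bullet> (z - c)" by (simp add: inner_diff_right)
    have "(\<Sum>n\<in>{1..N}. f n p) + rp \<le> (\<Sum>n\<in>{1..N}. f n z) + rz + (a * (norm (z - c))\<^sup>2 - a * (norm (z - p))\<^sup>2 - a * (norm (p - c))\<^sup>2 + (\<Sum>n\<in>{1..N}. Ln n) * (real \<tau> + 1) / 2 * S)"
      using Fsum r gg by linarith
    then show ?thesis using rp rz by (simp add: p_def c_def a_def S_def)
  qed
qed

end
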